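(* Let $n\ge 3$. Any generating set of the semigroup $\mathbf{W}^{\le 5}_{\mathrm{bf}}(n)$ has at least $(n-2)!$ elements.
   Context: Let $Q=\{0,\dots,n-1\}$ and $Q_M=\{1,\dots,n-3\}$. Transformations of $Q$ act on the right, $q(st)=(qs)t$. Let $\mathbf{B}_{\mathrm{bf}}(n)$ be the set of all transformations $t$ of $Q$ with $0\notin Qt$, $(n-1)t=n-1$, $(n-2)t=n-1$, and for all $j\ge1$, either $0t^j=n-1$ or $0t^j\ne qt^j$ for all $0<q<n-1$. Then $\mathbf{W}^{\le 5}_{\mathrm{bf}}(n)=\{t\in\mathbf{B}_{\mathrm{bf}}(n)\mid$ for all distinct $p,q\in Q_M$, $pt=qt=n-1$ or $pt\ne qt\}$, a semigroup under composition. *)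

theory Defs
  imports Main
begin

text \<open>Transformations of Q = {0..<n} are represented as functions nat \<Rightarrow> nat that map
  {0..<n} into itself and are the identity outside {0..<n} (so each transformation has a
  unique representative). Transformations act on the right: q(st) = (qs)t, hence the
  semigroup product s\<cdot>t is the function t \<circ> s.\<close>

definition is_transf :: "nat \<Rightarrow> (nat \<Rightarrow> nat) \<Rightarrow> bool" where
  "is_transf n t \<longleftrightarrow> (\<forall>q<n. t q < n) \<and> (\<forall>q\<ge>n. t q = q)"

definition tmul :: "(nat \<Rightarrow> nat) \<Rightarrow> (nat \<Rightarrow> nat) \<Rightarrow> (nat \<Rightarrow> nat)" where
  "tmul s t = t \<circ> s"

definition B_bf :: "nat \<Rightarrow> (nat \<Rightarrow> nat) set" where
  "B_bf n = {t. is_transf n t \<and> (\<forall>q<n. t q \<noteq> 0) \<and> t (n-1) = n-1 \<and> t (n-2) = n-1 \<and>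
     (\<forall>j\<ge>1. (t^^j) 0 = n-1 \<or> (\<forall>q. 0 < q \<and> q < n-1 \<longrightarrow> (t^^j) 0 \<noteq> (t^^j) q))}"

definition W5_bf :: "nat \<Rightarrow> (nat \<Rightarrow> nat) set" where
  "W5_bf n = {t \<in> B_bf n. \<forall>p q. p \<in> {1..n-3} \<and> q \<in> {1..n-3} \<and> p \<noteq> q \<longrightarrow>
      (t p = n-1 \<and> t q = n-1) \<or> t p \<noteq> t q}"

inductive_set sgrp_gen :: "(nat \<Rightarrow> nat) set \<Rightarrow> (nat \<Rightarrow> nat) set" for G where
  gen: "x \<in> G \<Longrightarrow> x \<in> sgrp_gen G"
| mul: "x \<in> sgrp_gen G \<Longrightarrow> y \<in> sgrp_gen G \<Longrightarrow> tmul x y \<in> sgrp_gen G"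

end

theory Submission
  imports Defs "HOL-Combinatorics.Permutations"
begin

lemma finite_transf: "finite {t. is_transf n t}"
proof -
  have "inj_on (\<lambda>t. map t [0..<n]) {t. is_transf n t}"
  proof (rule inj_onI)
    fix t u assume "t \<in> {t. is_transf n t}" "u \<in> {t. is_transf n t}"
      and e: "map t [0..<n] = map u [0..<n]"
    show "t = u"
    proof
      fix q show "t q = u q"
      proof (cases "q < n")
        case True then show ?thesis using e by (simp add: map_eq_conv)
      next
        case False then show ?thesis using \<open>t \<in> _\<close> \<open>u \<in> _\<close> by (simp add: is_transf_def)
      qed
    qed
  qed
  moreover have "(\<lambda>t. map t [0..<n]) ` {t. is_transf n t} \<subseteq> {xs. set xs \<subseteq> {..<n} \<and> length xs = n}"
    by (auto simp: is_transf_def)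
  moreover have "finite {xs. set xs \<subseteq> {..<n} \<and> length xs = n}"
    by (rule finite_lists_length_eq) simp
  ultimately show ?thesis by (meson finite_imageD finite_subset)
qed

lemma funpow_lt:
  assumes "is_transf n t" "x < n" shows "(t^^j) x < n"
  using assms by (induction j) (auto simp: is_transf_def)

lemma funpow_inj:
  assumes tr: "is_transf n t" and inj: "inj_on t {..<n-1}" and fix1: "t (n-1) = n-1"
  shows "x < n \<Longrightarrow> y < n \<Longrightarrow> (t^^j) x = (t^^j) y \<Longrightarrow> (t^^j) x \<noteq> n-1 \<Longrightarrow> x = y"
proof (induction j)
  case 0 then show ?case by simp
next
  case (Suc j)
  let ?a = "(t^^j) x" and ?b = "(t^^j) y"
  have a: "?a < n" "?b < n" using funpow_lt[OF tr] Suc.prems by auto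
  have e: "t ?a = t ?b" "t ?a \<noteq> n-1" using Suc.prems by auto
  then have "?a \<noteq> n-1" "?b \<noteq> n-1" using fix1 by auto
  with a have "?a \<in> {..<n-1}" "?b \<in> {..<n-1}" by auto
  with e inj have "?a = ?b" by (meson inj_onD)
  then show ?case using Suc \<open>?a \<noteq> n-1\<close> by auto
qed

definition mk :: "nat \<Rightarrow> (nat \<Rightarrow> nat) \<Rightarrow> nat \<Rightarrow> nat" where
  "mk n \<sigma> = (\<lambda>q. if q < n-2 then Suc (\<sigma> q) else if q < n then n-1 else q)"

lemma mk_props:
  assumes n: "n \<ge> 3" and p: "\<sigma> permutes {..<n-2}"
  shows "mk n \<sigma> \<in> W5_bf n" "inj_on (mk n \<sigma>) {..<n-1}"
proof -
  let ?t = "mk n \<sigma>"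
  have img: "\<And>q. q < n-2 \<Longrightarrow> \<sigma> q < n-2" using permutes_in_image[OF p] by auto
  have injs: "inj \<sigma>" using permutes_inj[OF p] .
  have img2: "\<And>q. q < n-2 \<Longrightarrow> Suc (\<sigma> q) < n"
  proof -
    fix q assume "q < n-2" then have "\<sigma> q < n-2" by (rule img)
    then show "Suc (\<sigma> q) < n" using n by linarith
  qed
  have tr: "is_transf n ?t" using img2 by (auto simp: is_transf_def mk_def)
  show inj: "inj_on ?t {..<n-1}"
  proof (rule inj_onI)
    fix x y assume "x \<in> {..<n-1}" "y \<in> {..<n-1}" "?t x = ?t y"
    then have xy: "x < n" "y < n" "?t x = ?t y" "x < n-1" "y < n-1" by auto
    show "x = y"
    proof (cases "x < n-2")
      case cx: True
      show ?thesis
      proof (cases "y < n-2")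
        case True
        then have "\<sigma> x = \<sigma> y" using cx xy(3) by (simp add: mk_def)
        then show ?thesis using injs by (simp add: inj_eq)
      next
        case False
        have "?t x < n-1" using img[OF cx] cx by (simp add: mk_def)
        moreover have "?t y = n-1" using False xy(2) \<open>y < n-1\<close> by (simp add: mk_def)
        ultimately show ?thesis using xy(3) by simp
      qed
    next
      case cx: False
      show ?thesis
      proof (cases "y < n-2")
        case True
        have "?t y < n-1" using img[OF True] True by (simp add: mk_def)
        moreover have "?t x = n-1" using cx xy(1) \<open>x < n-1\<close> by (simp add: mk_def)
        ultimately show ?thesis using xy(3) by simp
      next
        case False then show ?thesis using cx xy by linarith
      qed
    qed
  qed
  have f1: "?t (n-1) = n-1" "?t (n-2) = n-1" using n by (auto simp: mk_def)
  have nz: "\<forall>q<n. ?t q \<noteq> 0" using n by (auto simp: mk_def)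
  have orb: "\<forall>j\<ge>1. (?t^^j) 0 = n-1 \<or> (\<forall>q. 0 < q \<and> q < n-1 \<longrightarrow> (?t^^j) 0 \<noteq> (?t^^j) q)"
  proof (intro allI impI)
    fix j :: nat
    show "(?t^^j) 0 = n-1 \<or> (\<forall>q. 0 < q \<and> q < n-1 \<longrightarrow> (?t^^j) 0 \<noteq> (?t^^j) q)"
    proof (cases "(?t^^j) 0 = n-1")
      case False
      have "\<forall>q. 0 < q \<and> q < n-1 \<longrightarrow> (?t^^j) 0 \<noteq> (?t^^j) q"
      proof (intro allI impI)
        fix q assume q: "0 < q \<and> q < n-1"
        show "(?t^^j) 0 \<noteq> (?t^^j) q"
        proof
          assume e: "(?t^^j) 0 = (?t^^j) q"
          have "0 < n" "q < n" using n q by auto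
          from funpow_inj[OF tr inj f1(1) this e False] q show False by simp
        qed
      qed
      then show ?thesis by blast
    qed simp
  qed
  have B: "?t \<in> B_bf n" using tr f1 nz orb by (simp add: B_bf_def)
  show "?t \<in> W5_bf n" unfolding W5_bf_def
  proof (intro CollectI conjI B allI impI)
    fix p q assume h: "p \<in> {1..n-3} \<and> q \<in> {1..n-3} \<and> p \<noteq> q"
    then have "p \<in> {..<n-1}" "q \<in> {..<n-1}" "p \<noteq> q" using n by auto
    then have "?t p \<noteq> ?t q" using inj_onD[OF inj, of p q] by blast
    then show "?t p = n-1 \<and> ?t q = n-1 \<or> ?t p \<noteq> ?t q" by blast
  qed
qed

lemma not_prod:
  assumes n: "n \<ge> 3" and inj: "inj_on s {..<n-1}" and x: "x \<in> W5_bf n" and y: "y \<in> W5_bf n"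
    and e: "s = tmul x y"
  shows False
proof -
  have xt: "is_transf n x" "\<forall>q<n. x q \<noteq> 0" and yv: "y (n-1) = n-1" "y (n-2) = n-1"
    using x y unfolding W5_bf_def B_bf_def by blast+
  have "inj_on (y \<circ> x) {..<n-1}" using inj e by (simp add: tmul_def)
  then have ix: "inj_on x {..<n-1}" and iy: "inj_on y (x ` {..<n-1})"
  proof -
    assume a: "inj_on (y \<circ> x) {..<n-1}"
    show "inj_on x {..<n-1}" using a by (rule inj_on_imageI2)
  next
    assume a: "inj_on (y \<circ> x) {..<n-1}"
    show "inj_on y (x ` {..<n-1})" using a by (rule inj_on_imageI)
  qed
  have sub: "x ` {..<n-1} \<subseteq> {1..<n}"
  proof
    fix z assume "z \<in> x ` {..<n-1}"
    then obtain q where q: "q < n-1" "z = x q" by auto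
    then have "q < n" by linarith
    then have "x q < n" "x q \<noteq> 0" using xt by (auto simp: is_transf_def)
    then show "z \<in> {1..<n}" using q by auto
  qed
  have "card (x ` {..<n-1}) = n - 1" using card_image[OF ix] by simp
  moreover have "card {1..<n} = n - 1" by simp
  ultimately have "x ` {..<n-1} = {1..<n}" using sub by (metis card_subset_eq finite_atLeastLessThan)
  with iy have "inj_on y {1..<n}" by simp
  moreover have "n-2 \<in> {1..<n}" "n-1 \<in> {1..<n}" "n-2 \<noteq> n-1" using n by auto
  ultimately show False using yv by (metis inj_onD)
qed

theorem mainTheorem10:
  fixes n :: nat and G :: "(nat \<Rightarrow> nat) set"
  assumes "n \<ge> 3"
    and "G \<subseteq> W5_bf n"
    and "sgrp_gen G = W5_bf n"
  shows "finite G \<and> fact (n - 2) \<le> card G"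
proof -
  have W: "W5_bf n \<subseteq> {t. is_transf n t}"
  proof
    fix t assume "t \<in> W5_bf n" then show "t \<in> {t. is_transf n t}" by (simp add: W5_bf_def B_bf_def)
  qed
  have GW: "G \<subseteq> {t. is_transf n t}" using assms(2) W by (rule subset_trans)
  have fG: "finite G" by (rule finite_subset[OF GW finite_transf])
  let ?P = "{\<sigma>. \<sigma> permutes {..<n-2}}"
  have sub: "mk n ` ?P \<subseteq> G"
  proof
    fix s assume "s \<in> mk n ` ?P"
    then obtain \<sigma> where p: "\<sigma> permutes {..<n-2}" and s: "s = mk n \<sigma>" by auto
    have sW: "s \<in> sgrp_gen G" using mk_props[OF assms(1) p] s assms(3) by simp
    have si: "inj_on s {..<n-1}" using mk_props[OF assms(1) p] s by simp
    from sW show "s \<in> G"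
    proof cases
      case gen then show ?thesis .
    next
      case (mul x y)
      then show ?thesis using not_prod[OF assms(1) si, of x y] assms(3) by auto
    qed
  qed
  have inj: "inj_on (mk n) ?P"
  proof (rule inj_onI)
    fix a b assume a: "a \<in> ?P" and b: "b \<in> ?P" and e: "mk n a = mk n b"
    show "a = b"
    proof
      fix q show "a q = b q"
      proof (cases "q < n-2")
        case True then show ?thesis using fun_cong[OF e, of q] by (simp add: mk_def)
      next
        case False
        then have "q \<notin> {..<n-2}" by simp
        moreover have "a permutes {..<n-2}" "b permutes {..<n-2}" using a b by auto
        ultimately have "a q = q" "b q = q" by (meson permutes_not_in)+
        then show ?thesis by simp
      qed
    qed
  qed
  have "card (mk n ` ?P) = fact (n-2)"
    using card_image[OF inj] card_permutations[of "{..<n-2}" "n-2"] by simp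
  then show ?thesis using fG card_mono[OF fG sub] by simp
qed

end
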